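(* For all integers $3\le j<k$ there exists $\delta_{j,k}>0$ such that $$\lim_{n\to\infty,\ k\mid n}\ \sum_{b=1}^{\lfloor\delta_{j,k}n\rfloor}\ \sum_{a=0}^{n-b}E_{n,j,k}\!\left(\tfrac an,\tfrac bn\right)=0.$$
   Context: Let $g_k(x,y)=(1+x+y)^k-ky-\bigl((1+x)^k-1\bigr)$. For $n$ a multiple of $k$ and integers $a,b\ge0$ with $a+b\le n$, $E_{n,j,k}(a/n,b/n)=\binom{n}{a,\,b,\,n-a-b}S_{n,j,k}(a,b)\big/\binom{nj}{ja,\,jb,\,j(n-a-b)}$ with $S_{n,j,k}(a,b)$ the coefficient of $x^{ja}y^{jb}$ in $g_k(x,y)^{nj/k}$. This is the average number of LM1 stopping sets with $a$ correct and $b$ incorrect unverified variable nodes in a random $(j,k)$-regular LDPC code of length $n$. *)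

theory Defs
  imports Complex_Main "HOL-Computational_Algebra.Polynomial"
begin

text \<open>Bivariate polynomials in x and y are represented as int poly poly:
  the outer variable is y, the inner variable (coefficients) is x.\<close>

definition gpoly :: "nat \<Rightarrow> int poly poly" where
  "gpoly k = [:[:1, 1:], 1:] ^ k - of_nat k * [:0, 1:] - [: [:1, 1:] ^ k - 1 :]"

definition Scoef :: "nat \<Rightarrow> nat \<Rightarrow> nat \<Rightarrow> nat \<Rightarrow> nat \<Rightarrow> int" where
  "Scoef n j k a b = coeff (coeff (gpoly k ^ (n * j div k)) (j * b)) (j * a)"

definition trinom :: "nat \<Rightarrow> nat \<Rightarrow> nat \<Rightarrow> real" where
  "trinom m a b = fact m / (fact a * fact b * fact (m - a - b))"

text \<open>E_{n,j,k}(a/n, b/n), indexed by the integers a, b.\<close>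
definition Eavg :: "nat \<Rightarrow> nat \<Rightarrow> nat \<Rightarrow> nat \<Rightarrow> nat \<Rightarrow> real" where
  "Eavg n j k a b = trinom n a b * real_of_int (Scoef n j k a b) / trinom (n * j) (j * a) (j * b)"

end

theory Submission
  imports Defs
begin


lemma hom_sum:
  assumes "f 0 = 0" "\<And>a b. f (a + b) = f a + f b"
  shows "f (sum g A) = (\<Sum>i\<in>A. f (g i))"
proof (induction A rule: infinite_finite_induct)
  case (infinite A) then show ?case by (simp add: assms)
next
  case empty then show ?case by (simp add: assms)
next
  case (insert x F) then show ?case by (simp add: assms)
qed

lemma map_poly_mult_gen:
  fixes f :: "'a::comm_semiring_1 \<Rightarrow> 'b::comm_semiring_1"
  assumes "f 0 = 0" "\<And>a b. f (a + b) = f a + f b" "\<And>a b. f (a * b) = f a * f b"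
  shows "map_poly f (p * q) = map_poly f p * map_poly f q"
proof (rule poly_eqI)
  fix n
  show "coeff (map_poly f (p*q)) n = coeff (map_poly f p * map_poly f q) n"
    by (simp add: coeff_map_poly assms coeff_mult hom_sum[of f, OF assms(1,2)])
qed

lemma map_poly_add_gen:
  assumes "f 0 = 0" "\<And>a b. f (a + b) = f a + f b"
  shows "map_poly f (p + q) = map_poly f p + map_poly f q"
  by (rule poly_eqI) (simp add: coeff_map_poly assms)

lemma map_poly_diff_gen:
  fixes f :: "'a::comm_ring_1 \<Rightarrow> 'b::comm_ring_1"
  assumes "f 0 = 0" "\<And>a b. f (a - b) = f a - f b"
  shows "map_poly f (p - q) = map_poly f p - map_poly f q"
  by (rule poly_eqI) (simp add: coeff_map_poly assms)

lemma map_poly_power_gen: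
  fixes f :: "'a::comm_semiring_1 \<Rightarrow> 'b::comm_semiring_1"
  assumes "f 0 = 0" "f 1 = 1" "\<And>a b. f (a + b) = f a + f b" "\<And>a b. f (a * b) = f a * f b"
  shows "map_poly f (p ^ N) = map_poly f p ^ N"
  by (induction N) (simp_all add: assms map_poly_mult_gen)

definition F1 :: "real \<Rightarrow> int poly \<Rightarrow> real" where
  "F1 x c = poly (map_poly real_of_int c) x"

definition ev :: "real \<Rightarrow> real \<Rightarrow> int poly poly \<Rightarrow> real" where
  "ev x y P = poly (map_poly (F1 x) P) y"

lemma oi_mult: "map_poly real_of_int (p * q) = map_poly real_of_int p * map_poly real_of_int q"
  by (rule map_poly_mult_gen) auto
lemma oi_add: "map_poly real_of_int (p + q) = map_poly real_of_int p + map_poly real_of_int q"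
  by (rule map_poly_add_gen) auto
lemma oi_diff: "map_poly real_of_int (p - q) = map_poly real_of_int p - map_poly real_of_int q"
  by (rule map_poly_diff_gen) auto

lemma F1_0: "F1 x 0 = 0" by (simp add: F1_def)
lemma F1_1: "F1 x 1 = 1" by (simp add: F1_def)
lemma F1_add: "F1 x (a + b) = F1 x a + F1 x b" by (simp add: F1_def oi_add)
lemma F1_diff: "F1 x (a - b) = F1 x a - F1 x b" by (simp add: F1_def oi_diff)
lemma F1_mult: "F1 x (a * b) = F1 x a * F1 x b" by (simp add: F1_def oi_mult)

lemma ev_power: "ev x y (P ^ N) = ev x y P ^ N"
  unfolding ev_def
  by (simp add: map_poly_power_gen F1_0 F1_1 F1_add F1_mult)

lemma ev_gpoly: "ev x y (gpoly k) = (1 + x + y) ^ k - real k * y - ((1 + x) ^ k - 1)"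
proof -
  have m: "map_poly (F1 x) (p - q) = map_poly (F1 x) p - map_poly (F1 x) q" for p q
    by (rule map_poly_diff_gen) (simp_all add: F1_0 F1_diff)
  have mm: "map_poly (F1 x) (p * q) = map_poly (F1 x) p * map_poly (F1 x) q" for p q
    by (rule map_poly_mult_gen) (simp_all add: F1_0 F1_add F1_mult)
  have mp: "map_poly (F1 x) (p ^ N) = map_poly (F1 x) p ^ N" for p N
    by (rule map_poly_power_gen) (simp_all add: F1_0 F1_1 F1_add F1_mult)
  have F1p: "F1 x (c ^ N) = F1 x c ^ N" for c N
    by (induction N) (simp_all add: F1_1 F1_mult)
  have a: "F1 x [:1,1:] = 1 + x" by (simp add: F1_def map_poly_pCons)
  have b: "F1 x [:int k:] = real k"
    by (simp add: F1_def of_nat_poly map_poly_pCons)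
  show ?thesis
    unfolding ev_def gpoly_def
    by (simp add: m mm mp map_poly_pCons F1_0 F1_1 F1_diff F1p a b of_nat_poly)
qed



lemma clp: "coeff ([:a, b:] ^ n) i = of_nat (n choose i) * b ^ i * (a::'a::comm_semiring_1) ^ (n - i)"
proof (cases "i \<le> n")
  case True then show ?thesis by (rule coeff_linear_poly_power)
next
  case False
  have "degree ([:a, b:] ^ n) \<le> degree [:a,b:] * n" by (rule degree_power_le)
  also have "\<dots> \<le> n" by simp
  finally have "coeff ([:a, b:] ^ n) i = 0" using False by (intro coeff_eq_0) simp
  then show ?thesis using False by (simp add: binomial_eq_0)
qed

lemma coeff_gpoly: "coeff (coeff (gpoly k) i) l =
   int (k choose i) * int ((k - i) choose l)
   - (if i = 1 then (if l = 0 then int k else 0) else 0)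
   - (if i = 0 then int (k choose l) - (if l = 0 then 1 else 0) else 0)"
proof -
  have c1: "coeff (coeff ([:[:1,1:],1:] ^ k) i) l = int (k choose i) * int ((k - i) choose l)"
    by (simp add: clp coeff_mult of_nat_poly)
  have c2: "coeff (coeff (of_nat k * [:0, 1:] :: int poly poly) i) l = (if i = 1 then (if l = 0 then int k else 0) else 0)"
    by (simp add: of_nat_poly coeff_pCons split: nat.splits)
  have c3: "coeff (coeff [: [:1, 1:] ^ k - 1 :] i) l = (if i = 0 then int (k choose l) - (if l = 0 then 1 else 0) else 0)"
    by (simp add: coeff_pCons clp split: nat.splits)
  show ?thesis unfolding gpoly_def by (simp only: coeff_diff c1 c2 c3)
qed

definition goodp :: "nat \<Rightarrow> int poly poly \<Rightarrow> bool" where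
  "goodp d P \<longleftrightarrow> (\<forall>i l. 0 \<le> coeff (coeff P i) l \<and> (d * i < l \<longrightarrow> coeff (coeff P i) l = 0))"

lemma goodp_one: "goodp d 1"
  unfolding goodp_def by (auto simp: coeff_1)

lemma goodp_mult:
  assumes "goodp d P" "goodp d Q" shows "goodp d (P * Q)"
  unfolding goodp_def
proof (intro allI conjI impI)
  fix n l
  have e: "coeff (coeff (P * Q) n) l = (\<Sum>i\<le>n. \<Sum>t\<le>l. coeff (coeff P i) t * coeff (coeff Q (n - i)) (l - t))"
    by (simp add: coeff_mult coeff_sum)
  show "0 \<le> coeff (coeff (P * Q) n) l"
    unfolding e using assms unfolding goodp_def by (intro sum_nonneg mult_nonneg_nonneg) auto
  assume h: "d * n < l"
  have "coeff (coeff P i) t * coeff (coeff Q (n - i)) (l - t) = 0" if "i \<le> n" "t \<le> l" for i t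
  proof (cases "d * i < t")
    case True then show ?thesis using assms(1) unfolding goodp_def by simp
  next
    case False
    have "d * n = d * i + d * (n - i)" using that(1)
      by (metis add_mult_distrib2 le_add_diff_inverse)
    then have "d * (n - i) < l - t" using h False by linarith
    then show ?thesis using assms(2) unfolding goodp_def by simp
  qed
  then show "coeff (coeff (P * Q) n) l = 0" unfolding e by (auto intro!: sum.neutral)
qed

lemma goodp_power: "goodp d P \<Longrightarrow> goodp d (P ^ N)"
  by (induction N) (simp_all add: goodp_one goodp_mult)

lemma goodp_gpoly: "goodp (k - 1) (gpoly k)"
  unfolding goodp_def
proof (intro allI conjI impI)
  fix i l
  consider "i = (0::nat)" | "i = 1" | "i \<ge> 2" by linarith
  then show "0 \<le> coeff (coeff (gpoly k) i) l"
  proof cases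
    case 1 then show ?thesis by (simp add: coeff_gpoly)
  next
    case 2 then show ?thesis by (cases "l = 0") (simp_all add: coeff_gpoly)
  next
    case 3 then show ?thesis by (simp add: coeff_gpoly)
  qed
  assume h: "(k - 1) * i < l"
  consider "i = (0::nat)" | "i = 1" | "i \<ge> 2" by linarith
  then show "coeff (coeff (gpoly k) i) l = 0"
  proof cases
    case 1 then show ?thesis using h by (simp add: coeff_gpoly)
  next
    case 2 then show ?thesis using h by (simp add: coeff_gpoly binomial_eq_0)
  next
    case 3
    have "(k - 1) * 2 \<le> (k - 1) * i" using 3 by simp
    then have "k - i < l" using h 3 by linarith
    then show ?thesis using 3 by (simp add: coeff_gpoly binomial_eq_0)
  qed
qed

lemma poly_sum_upto:
  assumes "degree p \<le> D"
  shows "poly p (z::real) = (\<Sum>i\<le>D. coeff p i * z ^ i)"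
proof -
  have "poly p z = (\<Sum>i\<le>degree p. coeff p i * z ^ i)" by (rule poly_altdef)
  also have "\<dots> = (\<Sum>i\<le>D. coeff p i * z ^ i)"
    using assms by (intro sum.mono_neutral_left) (auto simp: coeff_eq_0)
  finally show ?thesis .
qed

lemma F1_ge:
  assumes "\<And>t. 0 \<le> coeff c t" "x \<ge> 0"
  shows "real_of_int (coeff c l) * x ^ l \<le> F1 x c" "0 \<le> F1 x c"
proof -
  have deg: "degree (map_poly real_of_int c) \<le> max l (degree c)"
    using map_poly_degree_leq[of real_of_int c] by linarith
  have e: "F1 x c = (\<Sum>t\<le>max l (degree c). real_of_int (coeff c t) * x ^ t)"
    unfolding F1_def by (subst poly_sum_upto[OF deg]) (simp add: coeff_map_poly)
  show "real_of_int (coeff c l) * x ^ l \<le> F1 x c"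
    unfolding e using assms by (intro member_le_sum) auto
  show "0 \<le> F1 x c" unfolding e using assms by (intro sum_nonneg) auto
qed

lemma coeff_le_ev:
  assumes "goodp d P" "x \<ge> 0" "y \<ge> 0"
  shows "real_of_int (coeff (coeff P i) l) * x ^ l * y ^ i \<le> ev x y P"
proof -
  have nn: "\<And>i t. 0 \<le> coeff (coeff P i) t" using assms(1) unfolding goodp_def by auto
  have deg: "degree (map_poly (F1 x) P) \<le> max i (degree P)"
    using map_poly_degree_leq[of "F1 x" P] by linarith
  have e: "ev x y P = (\<Sum>t\<le>max i (degree P). F1 x (coeff P t) * y ^ t)"
    unfolding ev_def by (subst poly_sum_upto[OF deg]) (simp add: coeff_map_poly F1_0)
  have "real_of_int (coeff (coeff P i) l) * x ^ l * y ^ i \<le> F1 x (coeff P i) * y ^ i"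
    using F1_ge(1)[OF nn assms(2)] assms(3) by (simp add: mult_right_mono)
  also have "\<dots> \<le> ev x y P"
    unfolding e using F1_ge(2)[OF nn assms(2)] assms(3) by (intro member_le_sum) auto
  finally show ?thesis .
qed

lemma Scoef_nonneg: "0 \<le> Scoef n j k a b"
  using goodp_power[OF goodp_gpoly] unfolding Scoef_def goodp_def by blast

lemma Scoef_zero: "(k - 1) * (j * b) < j * a \<Longrightarrow> Scoef n j k a b = 0"
  using goodp_power[OF goodp_gpoly] unfolding Scoef_def goodp_def by blast

lemma Scoef_le:
  assumes "x > 0" "y > 0"
  shows "real_of_int (Scoef n j k a b) \<le> ev x y (gpoly k) ^ (n * j div k) / (x ^ (j * a) * y ^ (j * b))"
proof -
  have "real_of_int (Scoef n j k a b) * x ^ (j * a) * y ^ (j * b) \<le> ev x y (gpoly k ^ (n * j div k))"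
    unfolding Scoef_def using assms by (intro coeff_le_ev[OF goodp_power[OF goodp_gpoly]]) auto
  then show ?thesis using assms by (simp add: ev_power field_simps)
qed

lemma pow_diff_le:
  fixes v w :: real
  assumes "0 \<le> w" "w \<le> v"
  shows "v ^ Suc r - w ^ Suc r \<le> real (Suc r) * (v - w) * v ^ r"
proof (induction r)
  case 0 then show ?case by simp
next
  case (Suc r)
  have "v ^ Suc (Suc r) - w ^ Suc (Suc r) = v * (v ^ Suc r - w ^ Suc r) + (v - w) * w ^ Suc r"
    by (simp add: algebra_simps)
  also have "\<dots> \<le> v * (real (Suc r) * (v - w) * v ^ r) + (v - w) * v ^ Suc r"
    using Suc assms by (intro add_mono mult_left_mono power_mono) auto
  also have "\<dots> = real (Suc (Suc r)) * (v - w) * v ^ Suc r"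
    by (simp add: algebra_simps)
  finally show ?case .
qed

lemma G_bound:
  fixes x y :: real
  assumes "0 \<le> x" "x \<le> 1" "0 \<le> y" "y \<le> 1" "2 \<le> k"
  shows "(1 + x + y) ^ k - real k * y - ((1 + x) ^ k - 1) \<le> 1 + real k ^ 2 * 3 ^ k * (y * (x + y))"
proof -
  obtain p where k: "k = Suc (Suc p)" using assms(5) by (metis add_2_eq_Suc le_Suc_ex)
  have h1: "(1 + x + y) ^ Suc (Suc p) - (1 + x) ^ Suc (Suc p) \<le> real (Suc (Suc p)) * y * (1 + x + y) ^ Suc p"
    using pow_diff_le[of "1 + x" "1 + x + y" "Suc p"] assms by simp
  have h2: "(1 + x + y) ^ Suc p - 1 ^ Suc p \<le> real (Suc p) * (x + y) * (1 + x + y) ^ p"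
    using pow_diff_le[of 1 "1 + x + y" p] assms by simp
  have h3: "(1 + x + y) ^ p \<le> 3 ^ k"
  proof -
    have "(1 + x + y) ^ p \<le> 3 ^ p" using assms by (intro power_mono) auto
    also have "(3::real) ^ p \<le> 3 ^ k" using k by (intro power_increasing) auto
    finally show ?thesis .
  qed
  have "(1 + x + y) ^ k - real k * y - ((1 + x) ^ k - 1) - 1
      = ((1 + x + y) ^ Suc (Suc p) - (1 + x) ^ Suc (Suc p)) - real k * y" using k by simp
  also have "\<dots> \<le> real k * y * (1 + x + y) ^ Suc p - real k * y" using h1 k by simp
  also have "\<dots> = real k * y * ((1 + x + y) ^ Suc p - 1 ^ Suc p)" by (simp add: algebra_simps)
  also have "\<dots> \<le> real k * y * (real (Suc p) * (x + y) * (1 + x + y) ^ p)"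
    using h2 assms by (intro mult_left_mono) auto
  also have "\<dots> \<le> real k * y * (real k * (x + y) * 3 ^ k)"
    using h3 assms k by (intro mult_left_mono mult_mono) auto
  also have "\<dots> = real k ^ 2 * 3 ^ k * (y * (x + y))" by (simp add: power2_eq_square algebra_simps)
  finally show ?thesis by simp
qed



lemma fact_lower: "(fact d :: real) * real d ^ t \<le> fact (d + t)"
proof (induction t)
  case 0 then show ?case by simp
next
  case (Suc t)
  have "(fact d :: real) * real d ^ Suc t = (fact d * real d ^ t) * real d" by simp
  also have "\<dots> \<le> fact (d + t) * real (Suc (d + t))"
    using Suc by (intro mult_mono) auto
  also have "\<dots> = fact (d + Suc t)" by (simp add: algebra_simps)
  finally show ?case .
qed

lemma fact_upper: "(fact (d + t) :: real) \<le> fact d * real (d + t) ^ t"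
proof (induction t)
  case 0 then show ?case by simp
next
  case (Suc t)
  have "(fact (d + Suc t) :: real) = fact (d + t) * real (Suc (d + t))" by (simp add: algebra_simps)
  also have "\<dots> \<le> (fact d * real (d + t) ^ t) * real (d + Suc t)"
    using Suc by (intro mult_mono) auto
  also have "\<dots> \<le> (fact d * real (d + Suc t) ^ t) * real (d + Suc t)"
    by (intro mult_mono mult_left_mono power_mono) auto
  also have "\<dots> = fact d * real (d + Suc t) ^ Suc t" by (simp add: algebra_simps)
  finally show ?case .
qed

lemma trinom_upper:
  assumes "a + b \<le> n"
  shows "trinom n a b \<le> real n ^ (a + b) / (fact a * fact b)"
proof -
  have "(fact n :: real) \<le> fact (n - (a + b)) * real n ^ (a + b)"
    using fact_upper[of "n - (a + b)" "a + b"] assms by simp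
  then show ?thesis unfolding trinom_def
    by (simp add: field_simps diff_diff_left)
qed

lemma trinom_lower:
  assumes "a + b \<le> n"
  shows "real (n - (a + b)) ^ (a + b) / (fact a * fact b) \<le> trinom n a b"
proof -
  have "(fact (n - (a + b)) :: real) * real (n - (a + b)) ^ (a + b) \<le> fact n"
    using fact_lower[of "n - (a + b)" "a + b"] assms by simp
  then show ?thesis unfolding trinom_def
    by (simp add: field_simps diff_diff_left)
qed

lemma fact_mult_upper:
  assumes "1 \<le> j"
  shows "(fact (j * a) :: real) \<le> fact a * real (j * a) ^ ((j - 1) * a)"
proof -
  have "j * a = a + (j - 1) * a" using assms by (simp add: algebra_simps)
  then show ?thesis using fact_upper[of a "(j - 1) * a"] by simp
qed



lemma alg1:
  fixes E t c n :: real
  assumes "t > 0" "c > 0"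
  shows "E * n * c ^ Suc p / (c / (2 * t)) ^ Suc (Suc p) = E * 2 ^ Suc (Suc p) * t ^ p * (n * t ^ 2 / c)"
proof -
  have "(c / (2 * t)) ^ Suc (Suc p) = c ^ Suc p * c / ((2 * t) ^ p * (2 * t) ^ 2)"
    by (simp add: power_divide power2_eq_square power_mult_distrib mult_ac)
  then show ?thesis using assms
    by (simp add: power_mult_distrib power2_eq_square field_simps)
qed

lemma alg2:
  fixes E t J n :: real
  assumes "t > 0" "J > 0" "n > 0"
  shows "E * n * (J * (n * t ^ 2)) ^ Suc p / ((n * J / 2) ^ Suc (Suc p) * t ^ Suc (Suc p))
       = E * 2 ^ Suc (Suc p) * t ^ p / J"
proof -
  define u where "u = n * J * t"
  have u: "u > 0" using assms unfolding u_def by simp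
  have 1: "J * (n * t ^ 2) = u * t" unfolding u_def by (simp add: power2_eq_square)
  have 2: "(n * J / 2) ^ Suc (Suc p) * t ^ Suc (Suc p) = u ^ Suc p * u / 2 ^ Suc (Suc p)"
    unfolding u_def by (simp add: power_divide power_mult_distrib mult_ac)
  have "E * n * (u * t) ^ Suc p / (u ^ Suc p * u / 2 ^ Suc (Suc p)) = E * n * t ^ Suc p * 2 ^ Suc (Suc p) / u"
    using u by (simp add: power_mult_distrib field_simps)
  also have "\<dots> = E * 2 ^ Suc (Suc p) * t ^ p / J"
    using assms unfolding u_def by (simp add: field_simps)
  finally show ?thesis unfolding 1 2 .
qed

lemma A_bound:
  fixes E t :: real and n j a s :: nat
  assumes "3 \<le> j" "E \<ge> 0" "t > 0" "t \<le> 1" "n > 0" "a \<le> s" "real n * t^2 \<le> real s"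
  shows "E * real n * real (j * a) ^ (j - 1) / ((real n * real j / 2) ^ j * (real s / (t * real n)) ^ j)
         \<le> E * 2 ^ j * t"
proof -
  obtain p where jp: "j = Suc (Suc p)" "p \<ge> 1" using assms(1)
    by (intro that[of "j - 2"]) auto
  have s0: "s > 0"
  proof (rule ccontr)
    assume "\<not> s > 0" then have "s = 0" by simp
    moreover have "real n * t^2 > 0" using assms(3,5) by simp
    ultimately show False using assms(7) by simp
  qed
  have "real n * real j / 2 * (real s / (t * real n)) = real j * real s / (2 * t)"
    using assms(3,5) by (simp add: field_simps)
  then have e1: "(real n * real j / 2) ^ j * (real s / (t * real n)) ^ j = (real j * real s / (2 * t)) ^ j"
    by (simp only: power_mult_distrib[symmetric])
  have "E * real n * real (j * a) ^ (j - 1) \<le> E * real n * real (j * s) ^ (j - 1)"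
    by (intro mult_left_mono power_mono) (use assms in auto)
  then have "E * real n * real (j * a) ^ (j - 1) / ((real n * real j / 2) ^ j * (real s / (t * real n)) ^ j)
      \<le> E * real n * real (j * s) ^ (j - 1) / (real j * real s / (2 * t)) ^ j"
    unfolding e1 using assms s0 jp by (intro divide_right_mono) auto
  also have "\<dots> = E * 2 ^ j * t ^ p * (real n * t ^ 2 / (real j * real s))"
  proof -
    have c: "real (Suc (Suc p)) * real s > 0" using s0 by simp
    show ?thesis unfolding jp(1) of_nat_mult diff_Suc_1 by (rule alg1[OF assms(3) c])
  qed
  also have "\<dots> \<le> E * 2 ^ j * t ^ p * 1"
  proof (intro mult_left_mono)
    have "real n * t ^ 2 \<le> real j * real s"
    proof -
      have "real s \<le> real j * real s" using assms(1) by (simp add: mult_le_cancel_right1)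
      then show ?thesis using assms(7) by linarith
    qed
    then show "real n * t ^ 2 / (real j * real s) \<le> 1"
      using s0 jp by (simp add: divide_le_eq)
  qed (use assms in auto)
  also have "\<dots> \<le> E * 2 ^ j * t"
  proof -
    have tp: "t ^ p \<le> t" using assms jp power_decreasing[of 1 p t] by simp
    have "0 \<le> E * 2 ^ j" using assms by simp
    then show ?thesis using mult_left_mono[OF tp, of "E * 2 ^ j"] by simp
  qed
  finally show ?thesis .
qed

lemma B_bound:
  fixes E t :: real and n j b :: nat
  assumes "3 \<le> j" "E \<ge> 0" "t > 0" "t \<le> 1" "n > 0" "real b = real n * t^2"
  shows "E * real n * real (j * b) ^ (j - 1) / ((real n * real j / 2) ^ j * t ^ j) \<le> E * 2 ^ j * t"
proof -
  obtain p where jp: "j = Suc (Suc p)" "p \<ge> 1" using assms(1)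
    by (intro that[of "j - 2"]) auto
  have "E * real n * real (j * b) ^ (j - 1) / ((real n * real j / 2) ^ j * t ^ j)
      = E * 2 ^ j * t ^ p / real j"
  proof -
    have c: "real (Suc (Suc p)) > 0" by simp
    have n: "real n > 0" using assms(5) by simp
    show ?thesis unfolding jp(1) of_nat_mult diff_Suc_1 assms(6) by (rule alg2[OF assms(3) c n])
  qed
  also have "\<dots> \<le> E * 2 ^ j * t ^ p"
  proof -
    have X: "0 \<le> E * 2 ^ j * t ^ p" using assms by simp
    have "E * 2 ^ j * t ^ p / real j \<le> E * 2 ^ j * t ^ p / 1"
      using X assms(1) by (intro divide_left_mono) auto
    then show ?thesis by simp
  qed
  also have "\<dots> \<le> E * 2 ^ j * t"
    using assms jp power_decreasing[of 1 p t] by (intro mult_left_mono) auto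
  finally show ?thesis .
qed



lemma prod_split:
  fixes E n x t h :: real and ca cb :: real and j a b :: nat
  assumes "x > 0" "t > 0" "h > 0"
  shows "n ^ (a + b) * E ^ (a + b) * (ca ^ (j - 1)) ^ a * (cb ^ (j - 1)) ^ b
          / (x ^ (j * a) * t ^ (j * b) * h ^ (j * (a + b)))
       = (E * n * ca ^ (j - 1) / (h ^ j * x ^ j)) ^ a * (E * n * cb ^ (j - 1) / (h ^ j * t ^ j)) ^ b"
proof -
  have "x ^ (j * a) * t ^ (j * b) * h ^ (j * (a + b)) = ((h ^ j * x ^ j) ^ a) * ((h ^ j * t ^ j) ^ b)"
    by (simp add: power_add power_mult_distrib add_mult_distrib2 mult_ac flip: power_mult)
  moreover have "n ^ (a + b) * E ^ (a + b) * (ca ^ (j - 1)) ^ a * (cb ^ (j - 1)) ^ b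
      = (E * n * ca ^ (j - 1)) ^ a * (E * n * cb ^ (j - 1)) ^ b"
    by (simp add: power_add power_mult_distrib mult_ac)
  ultimately show ?thesis by (simp add: power_divide)
qed

lemma canc: "c1 \<noteq> 0 \<Longrightarrow> c2 \<noteq> 0 \<Longrightarrow>
       N * E * ((c1 * A) * (c2 * B)) / (c1 * c2 * D) = N * E * A * B / (D::real)"
  by (simp add: field_simps)

lemma alg3:
  fixes P Q fa fb X H FF :: real
  assumes "fa \<noteq> 0" "fb \<noteq> 0" "X \<noteq> 0" "H \<noteq> 0" "FF \<noteq> 0"
  shows "(P / (fa * fb)) * (Q / X) / (H / FF) = P * Q * FF / (fa * fb * (X * H))"
  using assms by (simp add: field_simps)

lemma term_bound:
  fixes j k m a b n :: nat and t :: real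
  assumes j: "3 \<le> j" "j < k" and m: "1 \<le> m" and n: "n = k * m" and b: "1 \<le> b"
    and a: "a \<le> (k - 1) * b" and bn: "2 * k ^ 2 * b \<le> n" and t: "t > 0" "t ^ 2 = real b / real n"
  shows "Eavg n j k a b \<le> (exp (2 * (real k ^ 2 * 3 ^ k)) * 2 ^ j * t) ^ (a + b)"
proof -
  define s where "s = a + b"
  define K where "K = real k ^ 2 * 3 ^ k"
  define E where "E = exp (2 * K)"
  define x where "x = real s / (t * real n)"
  define N where "N = n * j div k"
  have k0: "k > 0" using j by simp
  have n0: "n > 0" using n m k0 by simp
  have K0: "K \<ge> 0" unfolding K_def by simp
  have E0: "E > 0" unfolding E_def by simp
  have bt: "real b = real n * t ^ 2" using t n0 by simp
  have sk: "s \<le> k * b" using a j unfolding s_def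
    by (metis Suc_diff_1 add.commute add_le_mono1 k0 mult_Suc)
  have kk: "k \<le> k ^ 2" by (simp add: power2_eq_square)
  have s2: "2 * s \<le> n"
  proof -
    have "2 * s \<le> 2 * (k * b)" using sk by simp
    also have "\<dots> \<le> 2 * (k ^ 2 * b)" using kk by simp
    finally show ?thesis using bn by simp
  qed
  have bnn: "b \<le> n" using s2 unfolding s_def by simp
  have t1: "t \<le> 1"
  proof -
    have "t ^ 2 \<le> 1 ^ 2" using t bnn n0 by simp
    then show ?thesis by (rule power2_le_imp_le) simp
  qed
  have sb: "b \<le> s" unfolding s_def by simp
  have x0: "x > 0" unfolding x_def using t n0 sb b by simp
  have x1: "x \<le> 1"
  proof -
    have "s * s \<le> (k * b) * (k * b)" using sk by (intro mult_le_mono) auto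
    also have "\<dots> = (k ^ 2 * b) * b" by (simp add: power2_eq_square)
    also have "\<dots> \<le> n * b" using bn by (intro mult_le_mono) auto
    finally have "real s ^ 2 \<le> real n * real b" by (simp add: power2_eq_square flip: of_nat_mult)
    also have "\<dots> = (t * real n) ^ 2" using bt by (simp add: power2_eq_square)
    finally have "real s \<le> t * real n" by (rule power2_le_imp_le) (use t in simp)
    then show ?thesis unfolding x_def using t n0 by simp
  qed
  have N: "N = m * j" unfolding N_def n using k0 by simp
  define G where "G = ev x t (gpoly k)"
  have G1: "1 \<le> G"
    using coeff_le_ev[OF goodp_gpoly[of k], of x t 0 0] x0 t unfolding G_def by (simp add: coeff_gpoly)
  have GK: "G \<le> exp (K * (t * (x + t)))"
  proof -
    have "G \<le> 1 + K * (t * (x + t))"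
      unfolding G_def ev_gpoly K_def using G_bound[of x t k] x0 x1 t t1 j by simp
    also have "\<dots> \<le> exp (K * (t * (x + t)))" by simp
    finally show ?thesis .
  qed
  have GN: "G ^ N \<le> E ^ s"
  proof -
    have "G ^ N \<le> exp (K * (t * (x + t))) ^ N" using G1 GK by (intro power_mono) auto
    also have "\<dots> = exp (real N * (K * (t * (x + t))))" by (simp add: exp_of_nat_mult)
    also have "\<dots> \<le> exp (real s * (2 * K))"
    proof -
      have tx: "t * (x + t) = (real s + real b) / real n"
        unfolding x_def using t n0 by (simp add: field_simps power2_eq_square)
      have "real N * (t * (x + t)) = real j * (real s + real b) / real k"
        unfolding tx N n using k0 m by (simp add: field_simps)
      also have "\<dots> \<le> real s + real b"
      proof -
        have "real j * (real s + real b) \<le> real k * (real s + real b)"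
          using j by (intro mult_right_mono) auto
        then show ?thesis using k0 by (simp add: pos_divide_le_eq mult.commute)
      qed
      also have "\<dots> \<le> 2 * real s" using sb by simp
      finally have "real N * (t * (x + t)) \<le> 2 * real s" .
      then have "real N * (K * (t * (x + t))) \<le> real s * (2 * K)"
        using K0 by (metis (no_types, opaque_lifting) mult.assoc mult.commute mult_right_mono)
      then show ?thesis by simp
    qed
    also have "\<dots> = E ^ s" unfolding E_def by (simp add: exp_of_nat_mult)
    finally show ?thesis .
  qed
  define S where "S = real_of_int (Scoef n j k a b)"
  have S0: "0 \<le> S" unfolding S_def using Scoef_nonneg by simp
  have S1: "S \<le> E ^ s / (x ^ (j * a) * t ^ (j * b))"
  proof -
    have "S \<le> G ^ N / (x ^ (j * a) * t ^ (j * b))"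
      unfolding S_def G_def N_def using Scoef_le[OF x0 t(1)] by simp
    also have "\<dots> \<le> E ^ s / (x ^ (j * a) * t ^ (j * b))"
      using GN x0 t by (intro divide_right_mono) auto
    finally show ?thesis .
  qed
  have ab: "a + b \<le> n" using s2 unfolding s_def by simp
  have tn: "trinom n a b \<le> real n ^ s / (fact a * fact b)" using trinom_upper[OF ab] unfolding s_def .
  have tn0: "0 \<le> trinom n a b" unfolding trinom_def by simp
  have js: "j * a + j * b = j * s" unfolding s_def by (simp add: algebra_simps)
  have jab: "j * a + j * b \<le> n * j" unfolding js using ab unfolding s_def by simp
  have tl: "real (n * j - (j * a + j * b)) ^ (j * a + j * b) / (fact (j * a) * fact (j * b))
            \<le> trinom (n * j) (j * a) (j * b)" by (rule trinom_lower[OF jab])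
  define h where "h = real n * real j / 2"
  have h0: "h > 0" unfolding h_def using n0 j by simp
  have hle: "h \<le> real (n * j - (j * a + j * b))"
  proof -
    have "2 * (j * s) \<le> n * j" using s2 by (metis mult.assoc mult.commute mult_le_mono2)
    then have "real (j * s) \<le> real (n * j) / 2" by linarith
    then show ?thesis unfolding js h_def using jab js by (simp add: of_nat_diff mult.commute)
  qed
  define L where "L = h ^ (j * s) / (fact (j * a) * fact (j * b))"
  have L0: "L > 0" unfolding L_def using h0 by simp
  have Ltl: "L \<le> trinom (n * j) (j * a) (j * b)"
  proof -
    have "L \<le> real (n * j - (j * a + j * b)) ^ (j * a + j * b) / (fact (j * a) * fact (j * b))"
      unfolding L_def js using h0 hle js by (intro divide_right_mono power_mono) auto
    then show ?thesis using tl by linarith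
  qed
  have "Eavg n j k a b = trinom n a b * S / trinom (n * j) (j * a) (j * b)"
    unfolding Eavg_def S_def by simp
  also have "\<dots> \<le> trinom n a b * S / L"
    using tn0 S0 L0 Ltl by (intro divide_left_mono) auto
  also have "\<dots> \<le> (real n ^ s / (fact a * fact b)) * (E ^ s / (x ^ (j * a) * t ^ (j * b))) / L"
    using tn S1 tn0 S0 L0 by (intro divide_right_mono mult_mono) auto
  also have "\<dots> = real n ^ s * E ^ s * (fact (j * a) * fact (j * b))
                     / (fact a * fact b * (x ^ (j * a) * t ^ (j * b) * h ^ (j * s)))"
    unfolding L_def by (rule alg3) (use x0 t h0 in auto)
  also have "\<dots> \<le> real n ^ s * E ^ s * ((fact a * real (j * a) ^ ((j - 1) * a)) * (fact b * real (j * b) ^ ((j - 1) * b)))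
                     / (fact a * fact b * (x ^ (j * a) * t ^ (j * b) * h ^ (j * s)))"
    using fact_mult_upper[of j a] fact_mult_upper[of j b] j x0 t h0 E0
    by (intro divide_right_mono mult_left_mono mult_mono) auto
  also have "\<dots> = real n ^ (a + b) * E ^ (a + b) * (real (j * a) ^ (j - 1)) ^ a * (real (j * b) ^ (j - 1)) ^ b
                     / (x ^ (j * a) * t ^ (j * b) * h ^ (j * (a + b)))"
  proof -
    show ?thesis unfolding s_def power_mult by (rule canc) auto
  qed
  also have "\<dots> = (E * real n * real (j * a) ^ (j - 1) / (h ^ j * x ^ j)) ^ a
                  * (E * real n * real (j * b) ^ (j - 1) / (h ^ j * t ^ j)) ^ b"
    by (rule prod_split[OF x0 t(1) h0])
  also have "\<dots> \<le> (E * 2 ^ j * t) ^ a * (E * 2 ^ j * t) ^ b"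
  proof (intro mult_mono power_mono)
    show "E * real n * real (j * a) ^ (j - 1) / (h ^ j * x ^ j) \<le> E * 2 ^ j * t"
      unfolding h_def x_def
      by (rule A_bound) (use j E0 t t1 n0 bt sb in \<open>auto simp: s_def\<close>)
    show "E * real n * real (j * b) ^ (j - 1) / (h ^ j * t ^ j) \<le> E * 2 ^ j * t"
      unfolding h_def by (rule B_bound) (use j E0 t t1 n0 bt in auto)
  qed (use E0 x0 t h0 in auto)
  also have "\<dots> = (E * 2 ^ j * t) ^ (a + b)" by (simp add: power_add)
  finally show ?thesis unfolding E_def K_def .
qed



lemma geo_half: "(\<Sum>a\<le>M. (1/2::real) ^ a) = 2 - (1/2) ^ M"
  by (induction M) (simp_all add: field_simps)

lemma lin_geo: "(\<Sum>b=1..B. real b * (1/2::real) ^ (b - 1)) = 4 - (2 * real B + 4) * (1/2) ^ B"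
proof (induction B)
  case 0 then show ?case by simp
next
  case (Suc B)
  have "(\<Sum>b=1..Suc B. real b * (1/2::real) ^ (b - 1)) = (\<Sum>b=1..B. real b * (1/2::real) ^ (b - 1)) + real (Suc B) * (1/2) ^ B"
    by (simp add: sum.cl_ivl_Suc)
  also have "\<dots> = 4 - (2 * real (Suc B) + 4) * (1/2) ^ Suc B"
    unfolding Suc by (simp add: field_simps)
  finally show ?case .
qed

lemma lin_geo_le: "(\<Sum>b=1..B. real b * (1/2::real) ^ (b - 1)) \<le> 4"
  unfolding lin_geo by simp

lemma Eavg_nonneg: "0 \<le> Eavg n j k a b"
  unfolding Eavg_def trinom_def using Scoef_nonneg[of n j k a b] by simp

lemma inner_bound:
  fixes j k m b n :: nat and c :: real
  assumes j: "3 \<le> j" "j < k" and m: "1 \<le> m" and n: "n = k * m" and b: "1 \<le> b"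
    and bn: "2 * k ^ 2 * b \<le> n" and c: "c = exp (2 * (real k ^ 2 * 3 ^ k)) * 2 ^ j"
    and z: "c * sqrt (real b / real n) \<le> 1/2"
  shows "(\<Sum>a=0..n-b. Eavg n j k a b) \<le> 2 * c * real b / sqrt (real n) * (1/2) ^ (b - 1)"
proof -
  define t where "t = sqrt (real b / real n)"
  define z where "z = c * t"
  have n0: "n > 0" using n m j by simp
  have t0: "t > 0" unfolding t_def using n0 b by simp
  have t2: "t ^ 2 = real b / real n" unfolding t_def by simp
  have c0: "c > 0" unfolding c by simp
  have z0: "0 \<le> z" unfolding z_def using c0 t0 by simp
  have zh: "z \<le> 1/2" unfolding z_def t_def using z by simp
  have tb: "Eavg n j k a b \<le> z ^ b * (1/2) ^ a" for a
  proof (cases "a \<le> (k - 1) * b")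
    case True
    have "Eavg n j k a b \<le> z ^ (a + b)"
      unfolding z_def c using term_bound[OF j m n b True bn t0 t2] .
    also have "\<dots> = z ^ b * z ^ a" by (simp add: power_add mult.commute)
    also have "\<dots> \<le> z ^ b * (1/2) ^ a" using z0 zh by (intro mult_left_mono power_mono) auto
    finally show ?thesis .
  next
    case False
    then have "(k - 1) * (j * b) < j * a" using j
      by (metis (no_types, lifting) mult.left_commute mult_less_mono2 not_le le_trans less_le_trans nat_mult_less_cancel_disj zero_less_numeral)
    then have "Eavg n j k a b = 0" unfolding Eavg_def by (simp add: Scoef_zero)
    then show ?thesis using z0 by simp
  qed
  have "(\<Sum>a=0..n-b. Eavg n j k a b) \<le> (\<Sum>a=0..n-b. z ^ b * (1/2) ^ a)"
    by (intro sum_mono tb)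
  also have "\<dots> = z ^ b * (\<Sum>a\<le>n-b. (1/2) ^ a)"
    by (simp add: sum_distrib_left atLeast0AtMost)
  also have "\<dots> \<le> z ^ b * 2" unfolding geo_half using z0 by (intro mult_left_mono) auto
  also have "z ^ b = z * z ^ (b - 1)" using b by (metis Suc_diff_1 less_le_trans power_Suc zero_less_one)
  also have "\<dots> \<le> z * (1/2) ^ (b - 1)" using z0 zh by (intro mult_left_mono power_mono) auto
  also have "z \<le> c * real b / sqrt (real n)"
  proof -
    have "t = sqrt (real b) / sqrt (real n)" unfolding t_def by (simp add: real_sqrt_divide)
    also have "\<dots> \<le> real b / sqrt (real n)"
    proof (intro divide_right_mono)
      have "sqrt (real b) \<le> sqrt (real b * real b)" using b by (intro real_sqrt_le_mono) simp
      then show "sqrt (real b) \<le> real b" by simp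
    qed simp
    finally have "t \<le> real b / sqrt (real n)" .
    then have "c * t \<le> c * (real b / sqrt (real n))" using c0 by (intro mult_left_mono) auto
    then show ?thesis unfolding z_def by simp
  qed
  finally show ?thesis by (simp add: mult_ac)
qed

lemma inv_sqrt_lim: "(\<lambda>m::nat. inverse (sqrt (real m))) \<longlonglongrightarrow> 0"
proof (rule tendsto_inverse_0_at_top)
  show "LIM m sequentially. sqrt (real m) :> at_top"
    unfolding filterlim_at_top
  proof
    fix Z :: real
    show "\<forall>\<^sub>F m in sequentially. Z \<le> sqrt (real m)"
      unfolding eventually_sequentially
    proof (intro exI allI impI)
      fix m assume "nat \<lceil>Z ^ 2\<rceil> \<le> m"
      then have "Z ^ 2 \<le> real m" by linarith
      then have "sqrt (Z ^ 2) \<le> sqrt (real m)" by (rule real_sqrt_le_mono)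
      then show "Z \<le> sqrt (real m)" by simp
    qed
  qed
qed

theorem mainTheorem14:
  fixes j k :: nat
  assumes "3 \<le> j" and "j < k"
  shows "\<exists>\<delta>::real. \<delta> > 0 \<and>
    (\<lambda>m. let n = k * m in
        \<Sum>b = 1..nat \<lfloor>\<delta> * real n\<rfloor>. \<Sum>a = 0..n - b. Eavg n j k a b)
    \<longlonglongrightarrow> 0"
proof -
  define c where "c = exp (2 * (real k ^ 2 * 3 ^ k)) * 2 ^ j"
  define \<delta> where "\<delta> = 1 / (4 * (real k ^ 2 + c ^ 2))"
  have c0: "c > 0" unfolding c_def by simp
  have pos: "0 < real k ^ 2 + c ^ 2" using c0 by (simp add: add_nonneg_pos)
  have d0: "\<delta> > 0" unfolding \<delta>_def using pos by simp
  have dk: "\<delta> * (4 * real k ^ 2) \<le> 1" unfolding \<delta>_def using c0 pos by (simp add: field_simps)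
  have dc: "\<delta> * (4 * c ^ 2) \<le> 1" unfolding \<delta>_def using c0 pos by (simp add: field_simps)
  define f where "f = (\<lambda>m. let n = k * m in
        \<Sum>b = 1..nat \<lfloor>\<delta> * real n\<rfloor>. \<Sum>a = 0..n - b. Eavg n j k a b)"
  have f0: "0 \<le> f m" for m
    unfolding f_def Let_def by (intro sum_nonneg) (simp add: Eavg_nonneg)
  have fb: "f m \<le> 8 * c * inverse (sqrt (real m))" if m: "1 \<le> m" for m
  proof -
    define n where "n = k * m"
    have n0: "n > 0" unfolding n_def using m assms by simp
    have "m \<le> n" unfolding n_def using assms by simp
    then have mn: "real m \<le> real n" by simp
    have inner: "(\<Sum>a = 0..n - b. Eavg n j k a b) \<le> 2 * c * real b / sqrt (real n) * (1/2) ^ (b - 1)"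
      if b: "b \<in> {1..nat \<lfloor>\<delta> * real n\<rfloor>}" for b
    proof (rule inner_bound[OF assms m n_def _ _ c_def])
      show b1: "1 \<le> b" using b by simp
      have "int b \<le> \<lfloor>\<delta> * real n\<rfloor>" using b by (cases "0 \<le> \<lfloor>\<delta> * real n\<rfloor>") (auto simp: le_nat_iff)
      then have bd: "real b \<le> \<delta> * real n" by linarith
      have "real (2 * k ^ 2 * b) = 2 * real k ^ 2 * real b" by simp
      also have "\<dots> \<le> 2 * real k ^ 2 * (\<delta> * real n)" using bd by (intro mult_left_mono) auto
      also have "\<dots> = (\<delta> * (4 * real k ^ 2)) * (real n / 2)" by (simp add: field_simps)
      also have "\<dots> \<le> 1 * (real n / 2)" using dk by (intro mult_right_mono) auto
      also have "\<dots> \<le> real n" by simp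
      finally show "2 * k ^ 2 * b \<le> n" by linarith
      have "(c * sqrt (real b / real n)) ^ 2 = c ^ 2 * (real b / real n)"
        by (simp add: power_mult_distrib)
      also have "\<dots> \<le> c ^ 2 * \<delta>" using bd n0 by (intro mult_left_mono) (auto simp: divide_le_eq)
      also have "\<dots> \<le> (1/2) ^ 2" using dc by (simp add: power2_eq_square mult_ac)
      finally show "c * sqrt (real b / real n) \<le> 1/2" by (rule power2_le_imp_le) simp
    qed
    have "f m = (\<Sum>b = 1..nat \<lfloor>\<delta> * real n\<rfloor>. \<Sum>a = 0..n - b. Eavg n j k a b)"
      unfolding f_def n_def Let_def by simp
    also have "\<dots> \<le> (\<Sum>b = 1..nat \<lfloor>\<delta> * real n\<rfloor>. (2 * c / sqrt (real n)) * (real b * (1/2) ^ (b - 1)))"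
      using inner by (intro sum_mono) (simp add: mult_ac)
    also have "\<dots> = (2 * c / sqrt (real n)) * (\<Sum>b = 1..nat \<lfloor>\<delta> * real n\<rfloor>. real b * (1/2) ^ (b - 1))"
      by (simp add: sum_distrib_left)
    also have "\<dots> \<le> (2 * c / sqrt (real n)) * 4"
      using c0 n0 by (intro mult_left_mono lin_geo_le) auto
    also have "\<dots> \<le> 8 * c * inverse (sqrt (real m))"
    proof -
      have "sqrt (real m) \<le> sqrt (real n)" using mn by (rule real_sqrt_le_mono)
      then have "inverse (sqrt (real n)) \<le> inverse (sqrt (real m))" using m by (intro le_imp_inverse_le) auto
      then show ?thesis using c0 by (simp add: divide_inverse)
    qed
    finally show ?thesis .
  qed
  have "f \<longlonglongrightarrow> 0"
  proof (rule tendsto_sandwich[of "\<lambda>_. 0" f sequentially "\<lambda>m. 8 * c * inverse (sqrt (real m))"])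
    show "\<forall>\<^sub>F m in sequentially. 0 \<le> f m" using f0 by simp
    show "\<forall>\<^sub>F m in sequentially. f m \<le> 8 * c * inverse (sqrt (real m))"
      unfolding eventually_sequentially using fb by blast
    show "(\<lambda>m. 8 * c * inverse (sqrt (real m))) \<longlonglongrightarrow> 0"
      using tendsto_mult_right_zero[OF inv_sqrt_lim, of "8 * c"] by simp
  qed simp
  then show ?thesis using d0 unfolding f_def by blast
qed


end
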